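(* Let $\alpha>0$, let $G$ be a standard normal random variable and let $G_\alpha:=\operatorname{sgn}(G)|G|^{2/\alpha}$. Then $\|G_\alpha\|_{\psi_\alpha}=(8/3)^{1/\alpha}$.
   Context: For a random variable $X$ and $\alpha>0$, $\|X\|_{\psi_\alpha}:=\inf\{K>0:\ \mathbb{E}\exp(|X/K|^\alpha)\le 2\}$ (with $\inf\emptyset=\infty$). $\operatorname{sgn}$ denotes the signum function. *)

theory Defs
  imports "HOL-Probability.Probability"
begin

text \<open>Orlicz psi_alpha quasi-norm: infimum of all K > 0 with E exp(|X/K|^alpha) \<le> 2,
  taken in the extended reals so that the infimum of the empty set is \<infinity>.\<close>
definition psi_norm :: "'a measure \<Rightarrow> real \<Rightarrow> ('a \<Rightarrow> real) \<Rightarrow> ereal" where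
  "psi_norm M \<alpha> X =
     Inf {ereal K | K. K > 0 \<and>
        (\<integral>\<^sup>+ x. ennreal (exp (\<bar>X x / K\<bar> powr \<alpha>)) \<partial>M) \<le> 2}"

end

theory Submission
  imports Defs
begin

lemma gauss_int:
  fixes c :: real assumes c: "c > 2"
  shows "(\<integral>\<^sup>+x. ennreal (std_normal_density x) * ennreal (exp (x\<^sup>2 / c)) \<partial>lborel)
         = ennreal (sqrt (c / (c - 2)))"
proof -
  define s where "s = sqrt (c / (c - 2))"
  have s: "s > 0" using c by (simp add: s_def)
  have s2: "s\<^sup>2 = c / (c - 2)" using c by (simp add: s_def)
  have pt: "std_normal_density x * exp (x\<^sup>2 / c) = s * normal_density 0 s x" for x
  proof -
    have "- x\<^sup>2 / 2 + x\<^sup>2 / c = - x\<^sup>2 / (2 * s\<^sup>2)"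
      using c unfolding s2 by (simp add: field_simps)
    moreover have "1 / sqrt (2 * pi) = s * (1 / sqrt (2 * pi * s\<^sup>2))"
      using s by (simp add: real_sqrt_mult)
    ultimately show ?thesis
      unfolding std_normal_density_def normal_density_def
      by (simp add: exp_add[symmetric])
  qed
  have "(\<integral>\<^sup>+x. ennreal (std_normal_density x) * ennreal (exp (x\<^sup>2 / c)) \<partial>lborel)
      = (\<integral>\<^sup>+x. ennreal s * ennreal (normal_density 0 s x) \<partial>lborel)"
    by (intro nn_integral_cong) (simp add: ennreal_mult'[symmetric] pt s less_imp_le)
  also have "\<dots> = ennreal s * (\<integral>\<^sup>+x. ennreal (normal_density 0 s x) \<partial>lborel)"
    by (rule nn_integral_cmult) simp
  also have "(\<integral>\<^sup>+x. ennreal (normal_density 0 s x) \<partial>lborel) = 1"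
  proof -
    interpret prob_space "density lborel (normal_density 0 s)"
      by (rule prob_space_normal_density[OF s])
    show ?thesis using emeasure_space_1 by (simp add: emeasure_density)
  qed
  finally show ?thesis by (simp add: s_def)
qed

lemma gauss_inf:
  fixes c :: real assumes c: "c > 0" "c \<le> 2"
  shows "(\<integral>\<^sup>+x. ennreal (std_normal_density x) * ennreal (exp (x\<^sup>2 / c)) \<partial>lborel) = \<infinity>"
proof -
  have "(\<integral>\<^sup>+(x::real). ennreal (1 / sqrt (2 * pi)) \<partial>lborel)
     \<le> (\<integral>\<^sup>+x. ennreal (std_normal_density x) * ennreal (exp (x\<^sup>2 / c)) \<partial>lborel)"
  proof (rule nn_integral_mono)
    fix x :: real
    have cx: "x\<^sup>2 / 2 \<le> x\<^sup>2 / c" using c by (intro divide_left_mono) auto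
    have "- x\<^sup>2 / 2 + x\<^sup>2 / c \<ge> 0"
      using cx by linarith
    hence "exp (- x\<^sup>2 / 2 + x\<^sup>2 / c) \<ge> 1" by simp
    hence "1 / sqrt (2 * pi) \<le> std_normal_density x * exp (x\<^sup>2 / c)"
      unfolding std_normal_density_def
      by (simp add: exp_add[symmetric] divide_le_eq)
    thus "ennreal (1 / sqrt (2 * pi)) \<le> ennreal (std_normal_density x) * ennreal (exp (x\<^sup>2 / c))"
      by (simp add: ennreal_mult'[symmetric])
  qed
  moreover have "(\<integral>\<^sup>+(x::real). ennreal (1 / sqrt (2 * pi)) \<partial>lborel) = \<infinity>"
    by (simp add: ennreal_mult_top)
  ultimately show ?thesis by (simp add: top_unique)
qed

theorem mainTheorem4:
  fixes M :: "'a measure" and G :: "'a \<Rightarrow> real" and \<alpha> :: real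
  assumes "prob_space M"
    and "distributed M lborel G std_normal_density"
    and "\<alpha> > 0"
  shows "psi_norm M \<alpha> (\<lambda>x. sgn (G x) * \<bar>G x\<bar> powr (2 / \<alpha>)) = ereal ((8 / 3) powr (1 / \<alpha>))"
proof -
  define b where "b = (8 / 3 :: real) powr (1 / \<alpha>)"
  have b: "b > 0" by (simp add: b_def)
  let ?X = "\<lambda>x. sgn (G x) * \<bar>G x\<bar> powr (2 / \<alpha>)"
  have key: "(\<integral>\<^sup>+ x. ennreal (exp (\<bar>?X x / K\<bar> powr \<alpha>)) \<partial>M) \<le> 2 \<longleftrightarrow> K \<ge> b"
    if K: "K > 0" for K
  proof -
    define c where "c = K powr \<alpha>"
    have c: "c > 0" using K by (simp add: c_def)
    have pt: "\<bar>?X x / K\<bar> powr \<alpha> = (G x)\<^sup>2 / c" for x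
    proof (cases "G x = 0")
      case True thus ?thesis using assms(3) by simp
    next
      case False
      have "\<bar>?X x / K\<bar> = \<bar>G x\<bar> powr (2 / \<alpha>) / K"
        using K False by (simp add: abs_mult abs_sgn_eq)
      hence "\<bar>?X x / K\<bar> powr \<alpha> = (\<bar>G x\<bar> powr (2 / \<alpha>)) powr \<alpha> / c"
        using K by (simp add: powr_divide c_def)
      also have "(\<bar>G x\<bar> powr (2 / \<alpha>)) powr \<alpha> = \<bar>G x\<bar> powr 2"
        using assms(3) by (simp add: powr_powr)
      also have "\<bar>G x\<bar> powr 2 = (G x)\<^sup>2"
        using False by (simp add: powr_numeral)
      finally show ?thesis .
    qed
    have meas: "(\<lambda>x::real. ennreal (exp (x\<^sup>2 / c))) \<in> borel_measurable lborel" by simp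
    have I: "(\<integral>\<^sup>+ x. ennreal (exp (\<bar>?X x / K\<bar> powr \<alpha>)) \<partial>M)
       = (\<integral>\<^sup>+x. ennreal (std_normal_density x) * ennreal (exp (x\<^sup>2 / c)) \<partial>lborel)"
      unfolding pt using distributed_nn_integral[OF assms(2) meas] by simp
    have cb: "c \<ge> 8 / 3 \<longleftrightarrow> K \<ge> b"
    proof
      assume "c \<ge> 8/3"
      hence "(8/3) powr (1/\<alpha>) \<le> c powr (1/\<alpha>)" using assms(3) by (simp add: powr_mono2)
      also have "c powr (1/\<alpha>) = K" using K assms(3) by (simp add: c_def powr_powr)
      finally show "K \<ge> b" by (simp add: b_def)
    next
      assume "K \<ge> b"
      hence "b powr \<alpha> \<le> K powr \<alpha>" using assms(3) b by (simp add: powr_mono2)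
      also have "b powr \<alpha> = 8/3" using assms(3) by (simp add: b_def powr_powr)
      finally show "c \<ge> 8/3" by (simp add: c_def)
    qed
    show ?thesis
    proof (cases "c > 2")
      case True
      have "ennreal (sqrt (c / (c - 2))) \<le> 2 \<longleftrightarrow> sqrt (c / (c - 2)) \<le> 2"
        by (metis ennreal_le_iff ennreal_numeral zero_le_numeral)
      also have "\<dots> \<longleftrightarrow> c / (c - 2) \<le> 4"
        by (metis real_sqrt_four real_sqrt_le_iff)
      also have "\<dots> \<longleftrightarrow> c \<ge> 8/3" using True by (simp add: field_simps)
      finally show ?thesis unfolding I gauss_int[OF True] cb .
    next
      case False
      hence "\<not> c \<ge> 8/3" by simp
      have c2: "c \<le> 2" using False by simp
      have ntop: "\<not> (\<infinity>::ennreal) \<le> 2" using ennreal_numeral_less_top[of "num.Bit0 num.One"] by (simp only: not_le infinity_ennreal_def)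
      have nbK: "\<not> b \<le> K" using cb \<open>\<not> c \<ge> 8/3\<close> by (simp only: simp_thms)
      show ?thesis unfolding I gauss_inf[OF c c2] by (simp only: ntop nbK simp_thms)
    qed
  qed
  have P: "(K > 0 \<and>
        (\<integral>\<^sup>+ x. ennreal (exp (\<bar>?X x / K\<bar> powr \<alpha>)) \<partial>M) \<le> 2) = (K \<ge> b)" for K
  proof (cases "K > 0")
    case True then show ?thesis using key[OF True] by (simp only: simp_thms)
  next
    case False then show ?thesis using b by auto
  qed
  have S: "{ereal K | K. K > 0 \<and>
        (\<integral>\<^sup>+ x. ennreal (exp (\<bar>?X x / K\<bar> powr \<alpha>)) \<partial>M) \<le> 2} = {ereal K | K. K \<ge> b}"
    by (simp only: P)
  have "Inf {ereal K | K. K \<ge> b} = ereal b"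
  proof (rule antisym)
    show "Inf {ereal K | K. K \<ge> b} \<le> ereal b" by (rule Inf_lower) auto
    show "ereal b \<le> Inf {ereal K | K. K \<ge> b}" by (rule Inf_greatest) auto
  qed
  thus ?thesis unfolding psi_norm_def S b_def by simp
qed

end
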